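(* Suppose Assumptions (A1) and (A2) hold and $C>C^*$. Then $$\left|\min_{\mathscr{S}}\Big(\inf_{T\in\mathcal{T}^{1/2}_{\mathscr{S}}}\sup_{\tau\in\mathrm{Lip}_C(\mathbb{R}^d)}\mathcal{R}(T,\mathscr{S},\tau)\Big)-\frac{C}{2}\,\frac{1}{\#\mathcal{S}_P}\min_{\mathscr{S}}\sum_{s\in\mathcal{S}_P\setminus\mathscr{S}}\|X_s-X_{N_{\mathscr{S}}(s)}\|\right|\le B\,\sigma_E\,\frac{\min\{\#(\mathcal{S}_E\cap\mathcal{S}_P),k\}}{\#\mathcal{S}_P},$$ where both minima range over nonempty $\mathscr{S}\in\mathcal{A}(k)$.
   Context: Sites are indexed by $\mathcal{S}=\{1,\dots,S\}$. $\mathcal{S}_E\subseteq\mathcal{S}$ has $\mathrm{card}(\mathcal{S}_E)\ge2$, and $\mathcal{S}_P\subseteq\mathcal{S}$ is nonempty, with $\#\mathcal{S}_P=\mathrm{card}(\mathcal{S}_P)$. Each site $s$ has covariates $X_s\in\mathbb{R}^d$ and a known standard deviation $\sigma_s>0$. $\|\cdot\|$ is the Euclidean norm, and $\mathrm{Lip}_C(\mathbb{R}^d)$ is the set of $C$-Lipschitz functions $\mathbb{R}^d\to\mathbb{R}$ with respect to $\|\cdot\|$, where $C>0$. (A1): the true conditional treatment effect function $\tau$ lies in $\mathrm{Lip}_C(\mathbb{R}^d)$. (A2): the $X_s$ are pairwise distinct. Fix an integer $1\le k<\mathrm{card}(\mathcal{S}_E)$ and set $\mathcal{A}(k)=\{\mathscr{S}\subset\mathcal{S}_E:\mathrm{card}(\mathscr{S})\le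 k\}$. For a nonempty $\mathscr{S}$ with elements $\mathscr{S}_1<\dots<\mathscr{S}_m$, the data are $\hat\tau_{\mathscr{S}}\sim\mathcal{N}_m(\tau_{\mathscr{S}},\mathrm{diag}(\sigma^2_{\mathscr{S}_1},\dots,\sigma^2_{\mathscr{S}_m}))$, where $\tau_{\mathscr{S}}=(\tau(X_{\mathscr{S}_i}))_{i=1}^m$. A treatment rule is a measurable map $T:\mathbb{R}^m\to[0,1]^{\#\mathcal{S}_P}$. $\mathcal{T}^{1/2}_{\mathscr{S}}$ is the set of treatment rules with $\mathbb{E}[T_s(U)]=1/2$ for all $s\in\mathcal{S}_P$ whenever $U\sim\mathcal{N}_m(0,\Sigma)$, for every positive definite diagonal $\Sigma$. Regret is $\mathcal{R}(T,\mathscr{S},\tau)=\frac{1}{\#\mathcal{S}_P}\sum_{s\in\mathcal{S}_P}\tau(X_s)\big(\mathbf{1}\{\tau(X_s)\ge0\}-\mathbb{E}_{\tau_{\mathscr{S}}}[T_s(\hat\tau_{\mathscr{S}})]\big)$. $N_{\mathscr{S}}(s)$ is the nearest neighbor of $s$ in $\mathscr{S}$ in Euclidean distance of covariates, with the smallest index chosen under ties. $C^*=\max\{\sqrt{\pi/2}\,\sigma_{N_{\mathscr{S}}(s)}/\|X_s-X_{N_{\mathscr{S}}(s)}\|:\mathscr{S}\in\mathcal{A}(k)\text{ nonempty},\ s\in\mathcal{S}_P\setminus\mathscr{S}\}$. $\sigma_E=\max_{s\in\mathcal{S}_E}\sigma_s$. $B=\arg\max_{z\ge0}z\Phi(-z)$,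 where $\Phi$ is the standard normal CDF. *)

theory Defs
  imports "HOL-Probability.Probability"
begin

text \<open>Observations for a nonempty site set Sc are functions on Sc (the vector
  indexed by the elements of Sc in increasing order); their measurable space is
  the product of Lebesgue-Borel over Sc.\<close>

definition obs_space :: "nat set \<Rightarrow> (nat \<Rightarrow> real) measure" where
  "obs_space Sc = PiM Sc (\<lambda>_. lborel)"

definition gauss_law :: "nat set \<Rightarrow> (nat \<Rightarrow> real) \<Rightarrow> (nat \<Rightarrow> real) \<Rightarrow> (nat \<Rightarrow> real) measure" where
  "gauss_law Sc mu sd = PiM Sc (\<lambda>i. density lborel (normal_density (mu i) (sd i)))"

definition treatment_rules :: "nat set \<Rightarrow> nat set \<Rightarrow> (nat \<Rightarrow> (nat \<Rightarrow> real) \<Rightarrow> real) set" where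
  "treatment_rules SP Sc = {T. \<forall>s\<in>SP. T s \<in> borel_measurable (obs_space Sc) \<and>
       (\<forall>u\<in>space (obs_space Sc). 0 \<le> T s u \<and> T s u \<le> 1)}"

definition half_rules :: "nat set \<Rightarrow> nat set \<Rightarrow> (nat \<Rightarrow> (nat \<Rightarrow> real) \<Rightarrow> real) set" where
  "half_rules SP Sc = {T \<in> treatment_rules SP Sc. \<forall>sd. (\<forall>i\<in>Sc. sd i > 0) \<longrightarrow>
       (\<forall>s\<in>SP. integral\<^sup>L (gauss_law Sc (\<lambda>_. 0) sd) (T s) = 1/2)}"

definition regret :: "nat set \<Rightarrow> (nat \<Rightarrow> 'a::euclidean_space) \<Rightarrow> (nat \<Rightarrow> real)
     \<Rightarrow> (nat \<Rightarrow> (nat \<Rightarrow> real) \<Rightarrow> real) \<Rightarrow> nat set \<Rightarrow> ('a \<Rightarrow> real) \<Rightarrow> real" where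
  "regret SP X \<sigma> T Sc \<tau> = (1 / real (card SP)) *
     (\<Sum>s\<in>SP. \<tau> (X s) * ((if \<tau> (X s) \<ge> 0 then 1 else 0)
        - integral\<^sup>L (gauss_law Sc (\<lambda>i. \<tau> (X i)) \<sigma>) (T s)))"

text \<open>Worst-case regret over C-Lipschitz functions, minimised over T^{1/2}
  (extended reals, so that an unbounded supremum is +infinity).\<close>
definition minimax_regret :: "real \<Rightarrow> nat set \<Rightarrow> (nat \<Rightarrow> 'a::euclidean_space) \<Rightarrow> (nat \<Rightarrow> real)
     \<Rightarrow> nat set \<Rightarrow> ereal" where
  "minimax_regret C SP X \<sigma> Sc = (INF T\<in>half_rules SP Sc.
       SUP \<tau>\<in>{\<tau>. C-lipschitz_on UNIV \<tau>}. ereal (regret SP X \<sigma> T Sc \<tau>))"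

definition nn :: "(nat \<Rightarrow> 'a::euclidean_space) \<Rightarrow> nat set \<Rightarrow> nat \<Rightarrow> nat" where
  "nn X Sc s = Min {j\<in>Sc. \<forall>i\<in>Sc. norm (X s - X j) \<le> norm (X s - X i)}"

definition designs :: "nat set \<Rightarrow> nat \<Rightarrow> nat set set" where
  "designs SE k = {Sc. Sc \<subseteq> SE \<and> Sc \<noteq> {} \<and> card Sc \<le> k}"

definition C_star :: "nat set \<Rightarrow> nat set \<Rightarrow> nat \<Rightarrow> (nat \<Rightarrow> 'a::euclidean_space) \<Rightarrow> (nat \<Rightarrow> real) \<Rightarrow> real" where
  "C_star SE SP k X \<sigma> = Max {sqrt (pi/2) * \<sigma> (nn X Sc s) / norm (X s - X (nn X Sc s)) | Sc s.
       Sc \<in> designs SE k \<and> s \<in> SP - Sc}"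

definition Phi :: "real \<Rightarrow> real" where
  "Phi x = measure (density lborel std_normal_density) {..x}"

definition B_const :: real where
  "B_const = (THE z. z \<ge> 0 \<and> (\<forall>w\<ge>0. w * Phi (-w) \<le> z * Phi (-z)))"

end

theory Submission
  imports Defs
begin


lemma nd_shift:
  assumes s: "s > 0" and g[measurable]: "g \<in> borel_measurable borel"
  shows "(\<integral>\<^sup>+x. ennreal (normal_density m s x) * g x \<partial>lborel)
       = (\<integral>\<^sup>+z. ennreal (std_normal_density z) * g (m + s * z) \<partial>lborel)"
proof -
  have "(\<integral>\<^sup>+x. ennreal (normal_density m s x) * g x \<partial>lborel)
     = ennreal \<bar>s\<bar> * (\<integral>\<^sup>+z. ennreal (normal_density m s (m + s * z)) * g (m + s * z) \<partial>lborel)"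
    by (rule nn_integral_real_affine) (use s in auto)
  also have "\<dots> = (\<integral>\<^sup>+z. ennreal s * (ennreal (normal_density m s (m + s * z)) * g (m + s * z)) \<partial>lborel)"
    using s by (subst nn_integral_cmult) auto
  also have "\<dots> = (\<integral>\<^sup>+z. ennreal (std_normal_density z) * g (m + s * z) \<partial>lborel)"
  proof (rule nn_integral_cong)
    fix z
    have "s * normal_density m s (m + s * z) = std_normal_density z"
      using s by (simp add: normal_density_def power_mult_distrib real_sqrt_mult field_simps)
    then show "ennreal s * (ennreal (normal_density m s (m + s * z)) * g (m + s * z))
        = ennreal (std_normal_density z) * g (m + s * z)"
      using s by (metis ennreal_mult' less_imp_le mult.assoc)
  qed
  finally show ?thesis .
qed

lemma prob_std: "prob_space (density lborel std_normal_density)"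
  by (rule prob_space_normal_density) simp

lemma Phi_nn: "ennreal (Phi y) = (\<integral>\<^sup>+z. ennreal (std_normal_density z) * indicator {..y} z \<partial>lborel)"
proof -
  interpret P: prob_space "density lborel std_normal_density" by (rule prob_std)
  have "ennreal (Phi y) = emeasure (density lborel std_normal_density) {..y}"
    unfolding Phi_def by (simp add: P.emeasure_eq_measure)
  also have "\<dots> = (\<integral>\<^sup>+z. ennreal (std_normal_density z) * indicator {..y} z \<partial>lborel)"
    by (subst emeasure_density) auto
  finally show ?thesis .
qed



lemma borel_ind_atMost[measurable]: "(\<lambda>z::real. indicator {..y} z :: ennreal) \<in> borel_measurable borel" by measurable

lemma nd_tail:
  assumes s: "s > 0"
  shows "(\<integral>\<^sup>+x. ennreal (normal_density m s x) * indicator {0..} x \<partial>lborel) = ennreal (Phi (m / s))"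
proof -
  have "(\<integral>\<^sup>+x. ennreal (normal_density m s x) * indicator {0..} x \<partial>lborel)
      = (\<integral>\<^sup>+z. ennreal (std_normal_density z) * indicator {0..} (m + s * z) \<partial>lborel)"
    using s by (rule nd_shift) measurable
  also have "\<dots> = ennreal \<bar>-1\<bar> * (\<integral>\<^sup>+z. ennreal (std_normal_density (0 + -1 * z)) * indicator {0..} (m + s * (0 + -1 * z)) \<partial>lborel)"
    by (rule nn_integral_real_affine) auto
  also have "\<dots> = (\<integral>\<^sup>+z. ennreal (std_normal_density z) * indicator {..m/s} z \<partial>lborel)"
  proof -
    have "\<And>z. indicator {0..} (m + s * (0 + -1 * z)) = (indicator {..m/s} z :: ennreal)"
      using s by (auto simp: indicator_def field_simps)
    moreover have "\<And>z. std_normal_density (0 + -1 * z) = std_normal_density z"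
      by (simp add: normal_density_def)
    ultimately show ?thesis by simp
  qed
  also have "\<dots> = ennreal (Phi (m/s))" by (simp add: Phi_nn)
  finally show ?thesis .
qed

lemma Phi_nonneg: "0 \<le> Phi x" unfolding Phi_def by simp

lemma Phi_le1: "Phi x \<le> 1"
proof -
  interpret P: prob_space "density lborel std_normal_density" by (rule prob_std)
  show ?thesis unfolding Phi_def by simp
qed

lemma std_total: "(\<integral>\<^sup>+z. ennreal (std_normal_density z) \<partial>lborel) = 1"
proof -
  interpret P: prob_space "density lborel std_normal_density" by (rule prob_std)
  have "emeasure (density lborel std_normal_density) UNIV = 1"
    using P.emeasure_space_1 by simp
  then show ?thesis by (simp add: emeasure_density)
qed

lemma Phi_sym: "Phi (-y) = 1 - Phi y"
proof -
  have "ennreal (Phi (-y)) = (\<integral>\<^sup>+z. ennreal (std_normal_density z) * indicator {..-y} z \<partial>lborel)"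
    by (simp add: Phi_nn)
  also have "\<dots> = ennreal \<bar>-1\<bar> * (\<integral>\<^sup>+z. ennreal (std_normal_density (0 + -1 * z)) * indicator {..-y} (0 + -1 * z) \<partial>lborel)"
    by (rule nn_integral_real_affine) auto
  also have "\<dots> = (\<integral>\<^sup>+z. ennreal (std_normal_density z) * indicator {y<..} z \<partial>lborel)"
  proof -
    have "AE z in lborel. z \<noteq> y" by (rule AE_lborel_singleton)
    then have "AE z in lborel. ennreal (std_normal_density (0 + -1 * z)) * indicator {..-y} (0 + -1 * z) = ennreal (std_normal_density z) * indicator {y<..} z"
      by eventually_elim (auto simp: indicator_def normal_density_def)
    then show ?thesis by (simp add: nn_integral_cong_AE)
  qed
  finally have a: "ennreal (Phi (-y)) = (\<integral>\<^sup>+z. ennreal (std_normal_density z) * indicator {y<..} z \<partial>lborel)" .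
  have "ennreal (Phi (-y)) + ennreal (Phi y) = (\<integral>\<^sup>+z. ennreal (std_normal_density z) * indicator {y<..} z + ennreal (std_normal_density z) * indicator {..y} z \<partial>lborel)"
    unfolding a Phi_nn[of y] by (subst nn_integral_add) auto
  also have "\<dots> = (\<integral>\<^sup>+z. ennreal (std_normal_density z) \<partial>lborel)"
    by (rule nn_integral_cong) (auto simp: indicator_def)
  also have "\<dots> = 1" by (rule std_total)
  finally have "ennreal (Phi (-y) + Phi y) = 1"
    using Phi_nonneg by (simp add: ennreal_plus)
  then have "Phi (-y) + Phi y = 1"
    using Phi_nonneg by (metis add_nonneg_nonneg ennreal_eq_1)
  then show ?thesis by simp
qed

lemma Phi_0: "Phi 0 = 1/2"
  using Phi_sym[of 0] by simp



lemma cont_std: "continuous_on A std_normal_density"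
  unfolding std_normal_density_def[abs_def] by (intro continuous_intros) auto

lemma Phi_split:
  assumes "a \<le> u"
  shows "Phi u = Phi a + integral {a..u} std_normal_density"
proof -
  have int: "(std_normal_density has_integral integral {a..u} std_normal_density) {a..u}"
    by (intro integrable_integral integrable_continuous_interval cont_std)
  have I: "(\<integral>\<^sup>+z. ennreal (std_normal_density z) * indicator {a..u} z \<partial>lborel) = ennreal (integral {a..u} std_normal_density)"
    by (rule nn_integral_has_integral_lebesgue'[OF _ int]) simp
  have "ennreal (Phi u) = (\<integral>\<^sup>+z. ennreal (std_normal_density z) * indicator {..<a} z + ennreal (std_normal_density z) * indicator {a..u} z \<partial>lborel)"
    unfolding Phi_nn using assms by (intro nn_integral_cong) (auto simp: indicator_def)
  also have "\<dots> = (\<integral>\<^sup>+z. ennreal (std_normal_density z) * indicator {..<a} z \<partial>lborel) + ennreal (integral {a..u} std_normal_density)"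
    by (subst nn_integral_add) (auto simp: I)
  also have "(\<integral>\<^sup>+z. ennreal (std_normal_density z) * indicator {..<a} z \<partial>lborel) = ennreal (Phi a)"
  proof -
    have "AE z in lborel. z \<noteq> a" by (rule AE_lborel_singleton)
    then have "AE z in lborel. ennreal (std_normal_density z) * indicator {..<a} z = ennreal (std_normal_density z) * indicator {..a} z"
      by eventually_elim (auto simp: indicator_def)
    then show ?thesis by (simp add: nn_integral_cong_AE Phi_nn)
  qed
  finally have "ennreal (Phi u) = ennreal (Phi a + integral {a..u} std_normal_density)"
    using Phi_nonneg int has_integral_nonneg[OF int] by (simp add: ennreal_plus)
  then show ?thesis using Phi_nonneg int has_integral_nonneg[OF int]
    by (metis add_nonneg_nonneg ennreal_inj normal_density_nonneg)
qed

lemma Phi_deriv: "(Phi has_real_derivative std_normal_density x) (at x)"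
proof -
  let ?a = "x - 1" and ?b = "x + 1"
  have "((\<lambda>u. integral {?a..u} std_normal_density) has_vector_derivative std_normal_density x) (at x within {?a..?b})"
    by (rule integral_has_vector_derivative) (auto intro: cont_std)
  moreover have "at x within {?a..?b} = at x"
    by (rule at_within_interior) auto
  ultimately have "((\<lambda>u. Phi ?a + integral {?a..u} std_normal_density) has_real_derivative std_normal_density x) (at x)"
    by (auto simp: has_real_derivative_iff_has_vector_derivative intro!: derivative_eq_intros)
  then show ?thesis
    by (rule has_field_derivative_transform_within_open[where S="{?a<..<?b}"]) (auto intro!: Phi_split[symmetric])
qed

lemma Phi_cont: "isCont Phi x"
  using Phi_deriv DERIV_isCont by blast

lemma Phi_mono: "x \<le> y \<Longrightarrow> Phi x \<le> Phi y"
proof -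
  assume xy: "x \<le> y"
  have "integral {x..y} std_normal_density \<ge> 0"
    by (rule integral_nonneg) (auto intro: integrable_continuous_interval cont_std)
  then show ?thesis using Phi_split[OF xy] by simp
qed

lemma std_deriv: "(std_normal_density has_real_derivative (- x * std_normal_density x)) (at x)"
  unfolding std_normal_density_def[abs_def]
  by (auto intro!: derivative_eq_intros simp: power2_eq_square field_simps)

lemma std_max: "std_normal_density x \<le> 1 / sqrt (2 * pi)"
  proof -
  have "exp (- x\<^sup>2 / 2) \<le> 1" by simp
  then show ?thesis unfolding std_normal_density_def by (simp add: divide_right_mono)
qed

lemma std_pos: "std_normal_density x > 0"
  by (simp add: normal_density_pos)




lemma Phi_chain:
  assumes "(g has_real_derivative g') (at x)"
  shows "((\<lambda>x. Phi (g x)) has_real_derivative std_normal_density (g x) * g') (at x)"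
  using DERIV_chain2[OF Phi_deriv assms] .

lemma Phi_chain_intro[derivative_intros]:
  "(g has_real_derivative g') (at x within s) \<Longrightarrow> ((\<lambda>x. Phi (g x)) has_real_derivative std_normal_density (g x) * g') (at x within s)"
  by (rule DERIV_chain2[OF Phi_deriv])

lemma std_chain_intro[derivative_intros]:
  "(g has_real_derivative g') (at x within s) \<Longrightarrow> ((\<lambda>x. std_normal_density (g x)) has_real_derivative (- g x * std_normal_density (g x)) * g') (at x within s)"
  by (rule DERIV_chain2[OF std_deriv])

lemma std_even: "std_normal_density (-x) = std_normal_density x"
  by (simp add: normal_density_def)

lemma Phi_at_bot: "(Phi \<longlongrightarrow> 0) at_bot"
proof -
  interpret real_distribution "density lborel std_normal_density"
    by (simp add: real_distribution_def real_distribution_axioms_def prob_std)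
  have "Phi = cdf (density lborel std_normal_density)"
    by (auto simp: Phi_def cdf_def)
  then show ?thesis using cdf_lim_at_bot by simp
qed

lemma Phi_neg_at_top: "((\<lambda>t. Phi (-t)) \<longlongrightarrow> 0) at_top"
  using filterlim_compose[OF Phi_at_bot filterlim_uminus_at_bot_at_top] by simp

lemma std_div_at_top: "((\<lambda>t. std_normal_density t / t) \<longlongrightarrow> 0) at_top"
proof (rule tendsto_sandwich[of "\<lambda>_. 0" _ _ "\<lambda>t. (1 / sqrt (2*pi)) / t"])
  show "eventually (\<lambda>t. 0 \<le> std_normal_density t / t) at_top"
    using eventually_gt_at_top[of 0] by eventually_elim simp
  show "eventually (\<lambda>t. std_normal_density t / t \<le> (1 / sqrt (2*pi)) / t) at_top"
    using eventually_gt_at_top[of 0] by eventually_elim (intro divide_right_mono std_max, simp)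
  show "((\<lambda>_. 0::real) \<longlongrightarrow> 0) at_top" by simp
  show "((\<lambda>t. (1 / sqrt (2*pi)) / t) \<longlongrightarrow> 0) at_top"
    by (intro tendsto_divide_0[OF tendsto_const] filterlim_at_top_imp_at_infinity filterlim_ident)
qed

lemma mills:
  assumes t: "t > 0"
  shows "Phi (-t) \<le> std_normal_density t / t"
proof -
  let ?G = "\<lambda>t. std_normal_density t / t - Phi (-t)"
  have lim: "(?G \<longlongrightarrow> 0 - 0) at_top"
    by (intro tendsto_diff std_div_at_top Phi_neg_at_top)
  have "0 < ?G t"
  proof (rule DERIV_neg_imp_decreasing_at_top[where flim=0 and f="?G" and b=t])
    fix x assume x: "x \<ge> t"
    then have xp: "x > 0" using t by simp
    have d1: "((\<lambda>t. Phi (-t)) has_real_derivative std_normal_density (-x) * (-1)) (at x)"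
      by (rule Phi_chain) (auto intro!: derivative_eq_intros)
    have "(?G has_real_derivative ((- x * std_normal_density x) * x - std_normal_density x * 1) / (x * x) - std_normal_density (-x) * (-1)) (at x)"
      using xp by (intro DERIV_diff DERIV_divide std_deriv d1 DERIV_ident) auto
    moreover have "((- x * std_normal_density x) * x - std_normal_density x * 1) / (x * x) - std_normal_density (-x) * (-1) = - std_normal_density x / (x*x)"
      using xp by (simp add: std_even field_simps)
    moreover have "- std_normal_density x / (x*x) < 0" using xp std_pos[of x] by simp
    ultimately show "\<exists>y. DERIV ?G x :> y \<and> y < 0" by metis
  qed (use lim in simp)
  then show ?thesis by simp
qed

definition k0 :: real where "k0 = sqrt (pi / 2)"

lemma k0_pos: "k0 > 0" unfolding k0_def by simp

lemma k0_std0: "k0 * std_normal_density 0 = 1/2"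
proof -
  have "std_normal_density 0 = 1 / sqrt (2*pi)" by (simp add: std_normal_density_def)
  then have "k0 * std_normal_density 0 = sqrt (pi/2) / sqrt (2*pi)" by (simp add: k0_def)
  also have "\<dots> = sqrt ((pi/2) / (2*pi))" by (simp only: real_sqrt_divide)
  also have "(pi/2) / (2*pi) = (1/2::real)\<^sup>2" by (simp add: power2_eq_square)
  also have "sqrt ((1/2::real)\<^sup>2) = 1/2" by (simp only: real_sqrt_abs)
  finally show ?thesis .
qed

lemma E_nonneg:
  assumes t: "t \<ge> 0"
  shows "Phi (-t) \<le> (k0 + t) * std_normal_density t"
proof (cases "t * (k0 + t) \<ge> 1")
  case True
  then have tp: "t > 0" using t k0_pos by (cases "t = 0") auto
  have "Phi (-t) \<le> std_normal_density t / t" by (rule mills[OF tp])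
  also have "\<dots> \<le> (k0 + t) * std_normal_density t"
  proof -
    have "1 * std_normal_density t \<le> (t * (k0 + t)) * std_normal_density t"
      using True std_pos[of t] by (intro mult_right_mono) auto
    then have "std_normal_density t \<le> ((k0 + t) * std_normal_density t) * t" by (simp add: mult_ac)
    then show ?thesis by (subst pos_divide_le_eq[OF tp])
  qed
  finally show ?thesis .
next
  case False
  let ?E = "\<lambda>t. (k0 + t) * std_normal_density t - Phi (-t)"
  have "?E 0 \<le> ?E t"
  proof (rule DERIV_nonneg_imp_nondecreasing[OF t])
    fix x assume x: "0 \<le> x" "x \<le> t"
    have d1: "((\<lambda>t. Phi (-t)) has_real_derivative std_normal_density (-x) * (-1)) (at x)"
      by (rule Phi_chain) (auto intro!: derivative_eq_intros)
    have der: "(?E has_real_derivative ((0 + 1) * std_normal_density x + (- x * std_normal_density x) * (k0 + x)) - std_normal_density (-x) * (-1)) (at x)"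
      by (rule DERIV_diff[OF DERIV_mult[OF DERIV_add[OF DERIV_const DERIV_ident] std_deriv] d1])
    have eq: "((0 + 1) * std_normal_density x + (- x * std_normal_density x) * (k0 + x)) - std_normal_density (-x) * (-1)
        = std_normal_density x * (2 - x * (k0 + x))"
      unfolding std_even by (simp add: algebra_simps)
    have "x * (k0 + x) \<le> t * (k0 + t)" using x k0_pos by (intro mult_mono) auto
    then have "0 \<le> 2 - x * (k0 + x)" using False by linarith
    then have nn: "std_normal_density x * (2 - x * (k0 + x)) \<ge> 0"
      by (rule mult_nonneg_nonneg[OF less_imp_le[OF std_pos]])
    show "\<exists>y. DERIV ?E x :> y \<and> y \<ge> 0" using der nn unfolding eq by blast
  qed
  moreover have "?E 0 = 0" using k0_std0 Phi_0 by simp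
  ultimately show ?thesis by simp
qed

lemma L1a:
  assumes t: "t \<ge> 0"
  shows "(t + k0) * Phi (-t) \<le> k0 / 2"
proof -
  let ?D = "\<lambda>t. k0 * (Phi t - 1/2) - t * Phi (-t)"
  have "?D 0 \<le> ?D t"
  proof (rule DERIV_nonneg_imp_nondecreasing[OF t])
    fix x assume x: "0 \<le> x" "x \<le> t"
    have d1: "((\<lambda>t. Phi (-t)) has_real_derivative std_normal_density (-x) * (-1)) (at x)"
      by (rule Phi_chain) (auto intro!: derivative_eq_intros)
    have der: "(?D has_real_derivative k0 * (std_normal_density x - 0) - (1 * Phi (-x) + (std_normal_density (-x) * (-1)) * x)) (at x)"
      by (rule DERIV_diff[OF DERIV_cmult[OF DERIV_diff[OF Phi_deriv DERIV_const]] DERIV_mult[OF DERIV_ident d1]])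
    have eq: "k0 * (std_normal_density x - 0) - (1 * Phi (-x) + (std_normal_density (-x) * (-1)) * x)
       = (k0 + x) * std_normal_density x - Phi (-x)"
      unfolding std_even by (simp add: algebra_simps)
    have nn: "(k0 + x) * std_normal_density x - Phi (-x) \<ge> 0" using E_nonneg[OF x(1)] by simp
    show "\<exists>y. DERIV ?D x :> y \<and> y \<ge> 0" using der nn unfolding eq by blast
  qed
  then have a: "0 \<le> k0 * (Phi t - 1/2) - t * Phi (-t)" using Phi_0 by simp
  have "Phi t = 1 - Phi (-t)" using Phi_sym[of t] by simp
  with a have "0 \<le> k0 * ((1 - Phi (-t)) - 1/2) - t * Phi (-t)" by simp
  then have "0 \<le> k0 / 2 - (t + k0) * Phi (-t)" by (simp add: algebra_simps)
  then show ?thesis by linarith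
qed

lemma L1b:
  assumes u: "u \<ge> 0"
  shows "(k0 - u) * Phi u \<le> k0 / 2"
proof -
  let ?F = "\<lambda>u. k0 / 2 - (k0 - u) * Phi u"
  have "?F 0 \<le> ?F u"
  proof (rule DERIV_nonneg_imp_nondecreasing[OF u])
    fix x assume x: "0 \<le> x" "x \<le> u"
    have der: "(?F has_real_derivative 0 - ((0 - 1) * Phi x + std_normal_density x * (k0 - x))) (at x)"
      by (rule DERIV_diff[OF DERIV_const DERIV_mult[OF DERIV_diff[OF DERIV_const DERIV_ident] Phi_deriv]])
    have nn: "0 - ((0 - 1) * Phi x + std_normal_density x * (k0 - x)) \<ge> 0"
    proof -
      have "Phi x \<ge> 1/2" using Phi_mono[OF x(1)] Phi_0 by simp
      moreover have "k0 * std_normal_density x \<le> 1/2"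
      proof -
        have "std_normal_density 0 = 1 / sqrt (2*pi)" by (simp add: std_normal_density_def)
        then have "std_normal_density x \<le> std_normal_density 0" using std_max[of x] by simp
        then have "k0 * std_normal_density x \<le> k0 * std_normal_density 0"
          using k0_pos by (intro mult_left_mono) auto
        then show ?thesis using k0_std0 by simp
      qed
      moreover have "x * std_normal_density x \<ge> 0" using x std_pos[of x] by simp
      moreover have "0 - ((0 - 1) * Phi x + std_normal_density x * (k0 - x)) = Phi x - k0 * std_normal_density x + x * std_normal_density x"
        by (simp add: algebra_simps)
      ultimately show ?thesis by linarith
    qed
    show "\<exists>y. DERIV ?F x :> y \<and> y \<ge> 0" using der nn by blast
  qed
  then show ?thesis using Phi_0 by simp
qed

lemma L1:
  assumes t: "t \<ge> -k0"
  shows "(t + k0) * Phi (-t) \<le> k0 / 2"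
proof (cases "t \<ge> 0")
  case True then show ?thesis by (rule L1a)
next
  case False
  then show ?thesis using L1b[of "-t"] by (simp add: algebra_simps)
qed



definition fB :: "real \<Rightarrow> real" where "fB z = z * Phi (-z)"
definition dB :: "real \<Rightarrow> real" where "dB z = Phi (-z) - z * std_normal_density z"

lemma fB_deriv: "(fB has_real_derivative dB x) (at x)"
proof -
  have "((\<lambda>z. z * Phi (-z)) has_real_derivative 1 * Phi (-x) + x * (std_normal_density (-x) * (-1))) (at x)"
    by (auto intro!: derivative_eq_intros)
  then show ?thesis unfolding fB_def[abs_def] dB_def by (simp add: std_even)
qed

lemma dB_deriv: "(dB has_real_derivative std_normal_density x * (x^2 - 2)) (at x)"
proof -
  have "((\<lambda>z. Phi (-z) - z * std_normal_density z) has_real_derivative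
     std_normal_density (-x) * (-1) - (1 * std_normal_density x + x * (- x * std_normal_density x * 1))) (at x)"
    by (auto intro!: derivative_eq_intros)
  then show ?thesis unfolding dB_def[abs_def] by (simp add: std_even power2_eq_square algebra_simps)
qed

lemma fB_cont: "continuous_on A fB"
  using fB_deriv by (meson DERIV_isCont continuous_at_imp_continuous_on)

lemma dB_neg: "z > 1 \<Longrightarrow> dB z < 0"
proof -
  assume z: "z > 1"
  have "Phi (-z) \<le> std_normal_density z / z" using mills z by simp
  also have "\<dots> < z * std_normal_density z"
  proof -
    have zz: "1 < z * z" using z by (simp add: less_1_mult)
    have "1 * std_normal_density z < (z * z) * std_normal_density z"
      using zz std_pos[of z] by (intro mult_strict_right_mono) auto
    then show ?thesis using z by (simp add: divide_less_eq algebra_simps)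
  qed
  finally show ?thesis unfolding dB_def by simp
qed

lemma dB_le1: "dB 1 \<le> 0"
  using mills[of 1] unfolding dB_def by simp

lemma fB_decr: "1 \<le> y \<Longrightarrow> y \<le> z \<Longrightarrow> fB z \<le> fB y"
proof -
  assume a: "1 \<le> y" "y \<le> z"
  show ?thesis
  proof (rule DERIV_nonpos_imp_nonincreasing[OF a(2)])
    fix x assume "y \<le> x" "x \<le> z"
    then have "dB x \<le> 0" using a dB_neg[of x] dB_le1 by (cases "x = 1") auto
    then show "\<exists>d. DERIV fB x :> d \<and> d \<le> 0" using fB_deriv by blast
  qed
qed

lemma fB_sdecr: "1 < z \<Longrightarrow> fB z < fB 1"
proof -
  assume z: "1 < z"
  let ?w = "(1 + z) / 2"
  have "fB z < fB ?w"
  proof (rule DERIV_neg_imp_decreasing[where f=fB and a="?w" and b=z])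
    show "?w < z" using z by simp
  next
    fix x assume "?w \<le> x" "x \<le> z"
    then have "dB x < 0" using z dB_neg by simp
    then show "\<exists>d. DERIV fB x :> d \<and> d < 0" using fB_deriv by blast
  qed
  also have "fB ?w \<le> fB 1" using z by (intro fB_decr) auto
  finally show ?thesis .
qed

lemma dB_sdecr: "0 \<le> a \<Longrightarrow> a < b \<Longrightarrow> b \<le> 1 \<Longrightarrow> dB b < dB a"
proof -
  assume a: "0 \<le> a" "a < b" "b \<le> 1"
  show ?thesis
  proof (rule DERIV_neg_imp_decreasing[where f=dB, OF a(2)])
    fix x assume x: "a \<le> x" "x \<le> b"
    have "x^2 \<le> 1" using x a by (simp add: power_le_one)
    then have "std_normal_density x * (x^2 - 2) < 0" using std_pos[of x] by (simp add: mult_pos_neg)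
    then show "\<exists>d. DERIV dB x :> d \<and> d < 0" using dB_deriv by blast
  qed
qed


lemma B_unique: "\<exists>!z. z \<ge> 0 \<and> (\<forall>w\<ge>0. w * Phi (-w) \<le> z * Phi (-z))"
proof -
  obtain z0 where z0: "z0 \<in> {0..1}" "\<And>y. y \<in> {0..1} \<Longrightarrow> fB y \<le> fB z0"
    using continuous_attains_sup[of "{0..1}" fB] fB_cont by auto
  have max: "\<And>w. w \<ge> 0 \<Longrightarrow> fB w \<le> fB z0"
  proof -
    fix w :: real assume w: "w \<ge> 0"
    show "fB w \<le> fB z0"
    proof (cases "w \<le> 1")
      case True then show ?thesis using z0 w by auto
    next
      case False
      then have "fB w < fB 1" by (intro fB_sdecr) simp
      also have "fB 1 \<le> fB z0" using z0 by auto
      finally show ?thesis by simp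
    qed
  qed
  have uniq: "z1 = z2" if z1: "z1 \<ge> 0" "\<And>w. w \<ge> 0 \<Longrightarrow> fB w \<le> fB z1"
      and z2: "z2 \<ge> 0" "\<And>w. w \<ge> 0 \<Longrightarrow> fB w \<le> fB z2" and lt: "z1 < z2" for z1 z2
  proof -
    have eq: "fB z1 = fB z2" using z1 z2 by (meson order_antisym)
    have z21: "z2 \<le> 1"
    proof (rule ccontr)
      assume "\<not> z2 \<le> 1"
      then have "fB z2 < fB 1" by (intro fB_sdecr) simp
      moreover have "fB 1 \<le> fB z2" using z2 by simp
      ultimately show False by simp
    qed
    let ?m = "(z1 + z2) / 2"
    obtain x1 where x1: "z1 < x1" "x1 < ?m" "fB ?m - fB z1 = (?m - z1) * dB x1"
      using MVT2[of z1 ?m fB dB] lt fB_deriv by auto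
    obtain x2 where x2: "?m < x2" "x2 < z2" "fB z2 - fB ?m = (z2 - ?m) * dB x2"
      using MVT2[of ?m z2 fB dB] lt fB_deriv by auto
    have "fB ?m \<le> fB z1" using z1 lt by auto
    then have "(?m - z1) * dB x1 \<le> 0" using x1(3) by simp
    moreover have "?m - z1 > 0" using lt by simp
    ultimately have n1: "dB x1 \<le> 0" by (simp add: mult_le_0_iff)
    have "(z2 - ?m) * dB x2 \<ge> 0" using x2(3) eq \<open>fB ?m \<le> fB z1\<close> by simp
    then have n2: "dB x2 \<ge> 0" using lt by (simp add: zero_le_mult_iff)
    have "dB x2 < dB x1" using x1 x2 z1 z21 by (intro dB_sdecr) auto
    with n1 n2 have False by simp
    then show ?thesis ..
  qed
  show ?thesis
  proof (rule ex1I[of _ z0])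
    show "z0 \<ge> 0 \<and> (\<forall>w\<ge>0. w * Phi (-w) \<le> z0 * Phi (-z0))"
      using z0 max unfolding fB_def by auto
    fix z assume z: "z \<ge> 0 \<and> (\<forall>w\<ge>0. w * Phi (-w) \<le> z * Phi (-z))"
    then have zm: "\<And>w. w \<ge> 0 \<Longrightarrow> fB w \<le> fB z" unfolding fB_def by auto
    have "z0 \<ge> 0" using z0 by auto
    show "z = z0"
    proof (cases z z0 rule: linorder_cases)
      case less then show ?thesis using uniq[of z z0] z zm \<open>z0 \<ge> 0\<close> max by auto
    next
      case greater then show ?thesis using uniq[of z0 z] z zm \<open>z0 \<ge> 0\<close> max by auto
    qed simp
  qed
qed

lemma B_props: "B_const \<ge> 0" "\<And>w. w \<ge> 0 \<Longrightarrow> w * Phi (-w) \<le> B_const"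
proof -
  have P: "B_const \<ge> 0 \<and> (\<forall>w\<ge>0. w * Phi (-w) \<le> B_const * Phi (-B_const))"
    unfolding B_const_def by (rule theI'[OF B_unique])
  then show "B_const \<ge> 0" by simp
  fix w :: real assume "w \<ge> 0"
  then have "w * Phi (-w) \<le> B_const * Phi (-B_const)" using P by simp
  also have "\<dots> \<le> B_const" using P Phi_le1[of "-B_const"] by (simp add: mult_left_le)
  finally show "w * Phi (-w) \<le> B_const" .
qed



lemma Phi_as_nd:
  assumes r: "r > 0"
  shows "ennreal (Phi (x / r)) = (\<integral>\<^sup>+y. ennreal (normal_density 0 r y) * (if y \<le> x then 1 else 0) \<partial>lborel)"
proof -
  have "(\<integral>\<^sup>+y. ennreal (normal_density 0 r y) * (if y \<le> x then 1 else 0) \<partial>lborel)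
     = (\<integral>\<^sup>+z. ennreal (std_normal_density z) * (if 0 + r * z \<le> x then 1 else 0) \<partial>lborel)"
    using r by (rule nd_shift) measurable
  also have "\<dots> = (\<integral>\<^sup>+z. ennreal (std_normal_density z) * indicator {..x/r} z \<partial>lborel)"
    using r by (intro nn_integral_cong) (auto simp: indicator_def field_simps)
  finally show ?thesis by (simp add: Phi_nn)
qed

lemma conv_Phi:
  assumes s: "s > 0" and r: "r > 0"
  shows "(\<integral>\<^sup>+x. ennreal (normal_density m s x) * ennreal (Phi (x / r)) \<partial>lborel)
       = ennreal (Phi (m / sqrt (s\<^sup>2 + r\<^sup>2)))"
proof -
  let ?N = "\<lambda>x y. ennreal (normal_density m s x) * (ennreal (normal_density 0 r y) * (if y \<le> x then 1 else 0))"
  have "(\<integral>\<^sup>+x. ennreal (normal_density m s x) * ennreal (Phi (x / r)) \<partial>lborel)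
      = (\<integral>\<^sup>+x. \<integral>\<^sup>+y. ?N x y \<partial>lborel \<partial>lborel)"
    by (intro nn_integral_cong) (simp add: Phi_as_nd[OF r] nn_integral_cmult)
  also have "\<dots> = (\<integral>\<^sup>+y. \<integral>\<^sup>+x. ?N x y \<partial>lborel \<partial>lborel)"
    by (rule lborel_pair.Fubini'[symmetric]) (simp add: case_prod_unfold, measurable)
  also have "\<dots> = (\<integral>\<^sup>+y. \<integral>\<^sup>+w. ?N (y + 1 * w) y \<partial>lborel \<partial>lborel)"
  proof (rule nn_integral_cong)
    fix y :: real assume "y \<in> space lborel"
    show "(\<integral>\<^sup>+x. ?N x y \<partial>lborel) = (\<integral>\<^sup>+w. ?N (y + 1 * w) y \<partial>lborel)"
      using nn_integral_real_affine[of "\<lambda>x. ?N x y" 1 y] by simp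
  qed
  also have "\<dots> = (\<integral>\<^sup>+w. \<integral>\<^sup>+y. ?N (y + 1 * w) y \<partial>lborel \<partial>lborel)"
    by (rule lborel_pair.Fubini'[symmetric]) (simp add: case_prod_unfold, measurable)
  also have "\<dots> = (\<integral>\<^sup>+w. ennreal (normal_density m (sqrt (s\<^sup>2 + r\<^sup>2)) w) * indicator {0..} w \<partial>lborel)"
  proof (rule nn_integral_cong)
    fix w :: real assume "w \<in> space lborel"
    have "(\<integral>\<^sup>+y. ?N (y + 1 * w) y \<partial>lborel)
        = (\<integral>\<^sup>+y. (ennreal (normal_density m s (y + w)) * ennreal (normal_density 0 r y)) * indicator {0..} w \<partial>lborel)"
      by (intro nn_integral_cong) (auto simp: indicator_def)
    also have "\<dots> = (\<integral>\<^sup>+y. ennreal (normal_density m s (y + w)) * ennreal (normal_density 0 r y) \<partial>lborel) * indicator {0..} w"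
      by (rule nn_integral_multc) measurable
    also have "(\<integral>\<^sup>+y. ennreal (normal_density m s (y + w)) * ennreal (normal_density 0 r y) \<partial>lborel)
       = ennreal \<bar>-1\<bar> * (\<integral>\<^sup>+y. ennreal (normal_density m s ((0 + -1 * y) + w)) * ennreal (normal_density 0 r (0 + -1 * y)) \<partial>lborel)"
      by (rule nn_integral_real_affine) auto
    also have "\<dots> = (\<integral>\<^sup>+y. ennreal (normal_density 0 s ((w - m) - y) * normal_density 0 r y) \<partial>lborel)"
      apply (subst nn_integral_cmult[symmetric])
      apply measurable
    proof (rule nn_integral_cong)
      fix y :: real assume "y \<in> space lborel"
      have a: "normal_density m s ((0 + -1 * y) + w) = normal_density 0 s ((w - m) - y)"
      proof -
        have "((0 + -1 * y) + w) - m = ((w - m) - y) - 0" by simp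
        then show ?thesis unfolding normal_density_def by metis
      qed
      have b: "normal_density 0 r (0 + -1 * y) = normal_density 0 r y"
        unfolding normal_density_def by simp
      show "ennreal \<bar>-1\<bar> * (ennreal (normal_density m s ((0 + -1 * y) + w)) * ennreal (normal_density 0 r (0 + -1 * y)))
          = ennreal (normal_density 0 s ((w - m) - y) * normal_density 0 r y)"
        unfolding a b by (simp add: ennreal_mult)
    qed
    also have "\<dots> = ennreal (normal_density 0 (sqrt (s\<^sup>2 + r\<^sup>2)) (w - m))"
      using conv_normal_density_zero_mean[OF s r] by (rule fun_cong)
    also have "normal_density 0 (sqrt (s\<^sup>2 + r\<^sup>2)) (w - m) = normal_density m (sqrt (s\<^sup>2 + r\<^sup>2)) w"
      by (simp add: normal_density_def)
    finally show "(\<integral>\<^sup>+y. ?N (y + 1 * w) y \<partial>lborel) = ennreal (normal_density m (sqrt (s\<^sup>2 + r\<^sup>2)) w) * indicator {0..} w" .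
  qed
  also have "\<dots> = ennreal (Phi (m / sqrt (s\<^sup>2 + r\<^sup>2)))"
    by (rule nd_tail) (use s r in \<open>auto intro: add_pos_pos\<close>)
  finally show ?thesis .
qed



lemma Phi_borel[measurable]: "Phi \<in> borel_measurable borel"
  by (rule borel_measurable_continuous_onI) (simp add: continuous_at_imp_continuous_on Phi_cont)

lemma meas_density_borel:
  assumes "G \<in> borel_measurable borel"
  shows "G \<in> borel_measurable (density lborel g)"
proof -
  have "measurable (density lborel g) (borel :: real measure) = measurable lborel borel"
    by (rule measurable_cong_sets) auto
  then show ?thesis using assms by simp
qed

lemma gauss_int:
  assumes n: "n \<in> Sc" and sd: "\<forall>i\<in>Sc. sd i > 0"
    and G[measurable]: "G \<in> borel_measurable borel" and G0: "\<And>x. 0 \<le> G x"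
  shows "integral\<^sup>L (gauss_law Sc mu sd) (\<lambda>u. G (u n))
       = enn2real (\<integral>\<^sup>+x. ennreal (normal_density (mu n) (sd n) x) * ennreal (G x) \<partial>lborel)"
proof -
  let ?M = "\<lambda>i. density lborel (normal_density (mu i) (sd i))"
  have ps: "\<And>i. i \<in> Sc \<Longrightarrow> prob_space (?M i)" using sd by (auto intro: prob_space_normal_density)
  have Gm: "G \<in> borel_measurable (?M n)" by (rule meas_density_borel[OF G])
  have "integral\<^sup>L (gauss_law Sc mu sd) (\<lambda>u. G (u n)) = integral\<^sup>L (distr (PiM Sc ?M) (?M n) (\<lambda>u. u n)) G"
    unfolding gauss_law_def by (rule integral_distr[symmetric, OF measurable_component_singleton[OF n, of ?M] Gm])
  also have "distr (PiM Sc ?M) (?M n) (\<lambda>u. u n) = ?M n" by (rule distr_PiM_component[OF ps n])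
  also have "integral\<^sup>L (?M n) G = integral\<^sup>L lborel (\<lambda>x. normal_density (mu n) (sd n) x *\<^sub>R G x)"
    by (rule integral_density) auto
  also have "\<dots> = enn2real (\<integral>\<^sup>+x. ennreal (normal_density (mu n) (sd n) x * G x) \<partial>lborel)"
    unfolding real_scaleR_def by (rule integral_eq_nn_integral) (auto simp: G0)
  also have "(\<integral>\<^sup>+x. ennreal (normal_density (mu n) (sd n) x * G x) \<partial>lborel)
     = (\<integral>\<^sup>+x. ennreal (normal_density (mu n) (sd n) x) * ennreal (G x) \<partial>lborel)"
    by (simp add: ennreal_mult G0)
  finally show ?thesis .
qed

lemma E_ind:
  assumes n: "n \<in> Sc" and sd: "\<forall>i\<in>Sc. sd i > 0"
  shows "integral\<^sup>L (gauss_law Sc mu sd) (\<lambda>u. if u n \<ge> 0 then 1 else 0) = Phi (mu n / sd n)"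
proof -
  have "integral\<^sup>L (gauss_law Sc mu sd) (\<lambda>u. (\<lambda>x::real. if x \<ge> 0 then 1 else 0::real) (u n))
     = enn2real (\<integral>\<^sup>+x. ennreal (normal_density (mu n) (sd n) x) * ennreal (if x \<ge> 0 then 1 else 0) \<partial>lborel)"
    by (rule gauss_int[OF n sd]) auto
  also have "(\<integral>\<^sup>+x. ennreal (normal_density (mu n) (sd n) x) * ennreal (if x \<ge> 0 then 1 else 0) \<partial>lborel)
      = (\<integral>\<^sup>+x. ennreal (normal_density (mu n) (sd n) x) * indicator {0..} x \<partial>lborel)"
    by (intro nn_integral_cong) (auto simp: indicator_def)
  also have "\<dots> = ennreal (Phi (mu n / sd n))" by (rule nd_tail) (use sd n in auto)
  finally show ?thesis using Phi_nonneg by simp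
qed

lemma E_smooth:
  assumes n: "n \<in> Sc" and sd: "\<forall>i\<in>Sc. sd i > 0" and r: "r > 0"
  shows "integral\<^sup>L (gauss_law Sc mu sd) (\<lambda>u. Phi (u n / r)) = Phi (mu n / sqrt ((sd n)\<^sup>2 + r\<^sup>2))"
proof -
  have "integral\<^sup>L (gauss_law Sc mu sd) (\<lambda>u. (\<lambda>x. Phi (x / r)) (u n))
     = enn2real (\<integral>\<^sup>+x. ennreal (normal_density (mu n) (sd n) x) * ennreal (Phi (x / r)) \<partial>lborel)"
    by (rule gauss_int[OF n sd]) (auto simp: Phi_nonneg)
  also have "(\<integral>\<^sup>+x. ennreal (normal_density (mu n) (sd n) x) * ennreal (Phi (x / r)) \<partial>lborel)
     = ennreal (Phi (mu n / sqrt ((sd n)\<^sup>2 + r\<^sup>2)))"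
    by (rule conv_Phi) (use sd n r in auto)
  finally show ?thesis using Phi_nonneg by simp
qed



lemma site_in:
  assumes s: "s > 0"
  shows "a * ((if a \<ge> 0 then 1 else 0) - Phi (a / s)) \<le> s * B_const"
proof (cases "a \<ge> 0")
  case True
  have "a * ((if a \<ge> 0 then 1 else 0) - Phi (a / s)) = s * ((a / s) * Phi (- (a / s)))"
    using True s Phi_sym[of "a/s"] by simp
  also have "\<dots> \<le> s * B_const"
    using True s by (intro mult_left_mono B_props(2)) auto
  finally show ?thesis .
next
  case False
  have "a * ((if a \<ge> 0 then 1 else 0) - Phi (a / s)) = s * ((- a / s) * Phi (- (- a / s)))"
    using False s by simp
  also have "\<dots> \<le> s * B_const"
    using False s by (intro mult_left_mono B_props(2)) (auto intro: divide_nonpos_pos)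
  finally show ?thesis .
qed

lemma site_out:
  assumes c: "c > 0" and am: "\<bar>a - m\<bar> \<le> c"
  shows "a * ((if a \<ge> 0 then 1 else 0) - Phi (m / (c / k0))) \<le> c / 2"
proof -
  define t where "t = m / (c / k0)"
  have mt: "m = (c / k0) * t" using c k0_pos unfolding t_def by simp
  have ck: "c / k0 > 0" using c k0_pos by simp
  show ?thesis
  proof (cases "a \<ge> 0")
    case True
    have e: "(c / k0) * (t + k0) = m + c" using mt k0_pos by (simp add: field_simps)
    have a1: "a \<le> (c / k0) * (t + k0)" unfolding e using am by (simp add: abs_le_iff)
    have "t + k0 \<ge> 0"
    proof -
      have "0 \<le> (c / k0) * (t + k0)" using a1 True by linarith
      then show ?thesis using ck by (metis mult_le_cancel_left_pos mult_zero_right)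
    qed
    then have tk: "t \<ge> -k0" by simp
    have "a * ((if a \<ge> 0 then 1 else 0) - Phi (m / (c / k0))) = a * Phi (-t)"
      using True Phi_sym[of t] unfolding t_def[symmetric] by simp
    also have "\<dots> \<le> ((c / k0) * (t + k0)) * Phi (-t)"
      using a1 Phi_nonneg by (intro mult_right_mono) auto
    also have "\<dots> = (c / k0) * ((t + k0) * Phi (-t))" by simp
    also have "\<dots> \<le> (c / k0) * (k0 / 2)"
      using ck L1[OF tk] by (intro mult_left_mono) auto
    also have "\<dots> = c / 2" using k0_pos by simp
    finally show ?thesis .
  next
    case False
    have e: "(c / k0) * ((-t) + k0) = c - m" using mt k0_pos by (simp add: field_simps)
    have a1: "- a \<le> (c / k0) * ((-t) + k0)" unfolding e using am by (simp add: abs_le_iff)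
    have "(-t) + k0 \<ge> 0"
    proof -
      have "0 \<le> (c / k0) * ((-t) + k0)" using a1 False by linarith
      then show ?thesis using ck by (metis mult_le_cancel_left_pos mult_zero_right)
    qed
    then have tk: "-t \<ge> -k0" by simp
    have "a * ((if a \<ge> 0 then 1 else 0) - Phi (m / (c / k0))) = (- a) * Phi (- (-t))"
      using False unfolding t_def[symmetric] by simp
    also have "\<dots> \<le> ((c / k0) * ((-t) + k0)) * Phi (- (-t))"
      using a1 Phi_nonneg by (intro mult_right_mono) auto
    also have "\<dots> = (c / k0) * (((-t) + k0) * Phi (- (-t)))" by simp
    also have "\<dots> \<le> (c / k0) * (k0 / 2)"
      using ck L1[OF tk] by (intro mult_left_mono) auto
    also have "\<dots> = c / 2" using k0_pos by simp
    finally show ?thesis .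
  qed
qed

lemma nn_props:
  fixes X :: "nat \<Rightarrow> 'a::euclidean_space"
  assumes fin: "finite Sc" and ne: "Sc \<noteq> {}"
  shows "nn X Sc s \<in> Sc" "\<And>i. i \<in> Sc \<Longrightarrow> norm (X s - X (nn X Sc s)) \<le> norm (X s - X i)"
proof -
  let ?f = "\<lambda>j. norm (X s - X j)"
  let ?A = "{j\<in>Sc. \<forall>i\<in>Sc. ?f j \<le> ?f i}"
  have "Min (?f ` Sc) \<in> ?f ` Sc" using fin ne by (intro Min_in) auto
  then obtain j where j: "j \<in> Sc" "?f j = Min (?f ` Sc)" by auto
  have "\<forall>i\<in>Sc. ?f j \<le> ?f i" using j fin by auto
  then have "?A \<noteq> {}" using j by auto
  moreover have "finite ?A" using fin by auto
  ultimately have "Min ?A \<in> ?A" by (rule Min_in[rotated])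
  then show "nn X Sc s \<in> Sc" "\<And>i. i \<in> Sc \<Longrightarrow> norm (X s - X (nn X Sc s)) \<le> norm (X s - X i)"
    unfolding nn_def by auto
qed

lemma nn_self:
  fixes X :: "nat \<Rightarrow> 'a::euclidean_space"
  assumes fin: "finite Sc" and s: "s \<in> Sc" and inj: "inj_on X Sc"
  shows "nn X Sc s = s"
proof -
  have ne: "Sc \<noteq> {}" using s by auto
  note p = nn_props[OF fin ne, where X=X and s=s]
  have "nn X Sc s \<in> Sc" by (rule p(1))
  have "norm (X s - X (nn X Sc s)) \<le> norm (X s - X s)" by (rule p(2)[OF s])
  then have "X (nn X Sc s) = X s" by simp
  then show ?thesis using inj s \<open>nn X Sc s \<in> Sc\<close> by (meson inj_onD)
qed

lemma infdist_nn:
  fixes X :: "nat \<Rightarrow> 'a::euclidean_space"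
  assumes fin: "finite Sc" and ne: "Sc \<noteq> {}"
  shows "infdist (X s) (X ` Sc) = norm (X s - X (nn X Sc s))"
proof (rule antisym)
  show "infdist (X s) (X ` Sc) \<le> norm (X s - X (nn X Sc s))"
  proof -
    have "X (nn X Sc s) \<in> X ` Sc" using nn_props(1)[OF fin ne, where X=X and s=s] by simp
    from infdist_le[OF this, of "X s"] show ?thesis by (simp add: dist_norm)
  qed
  show "norm (X s - X (nn X Sc s)) \<le> infdist (X s) (X ` Sc)"
    unfolding infdist_notempty[of "X ` Sc"]
  proof -
    have "norm (X s - X (nn X Sc s)) \<le> (INF a\<in>X ` Sc. dist (X s) a)"
      using ne nn_props(2)[OF fin ne, where X=X and s=s] by (intro cINF_greatest) (auto simp: dist_norm)
    then show "norm (X s - X (nn X Sc s)) \<le> infdist (X s) (X ` Sc)"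
      using ne by (simp add: infdist_notempty)
  qed
qed

lemma lip_infdist:
  assumes C: "C \<ge> 0"
  shows "C-lipschitz_on UNIV (\<lambda>x. C * infdist x A)"
proof (rule lipschitz_onI)
  fix x y :: 'a assume _: "x \<in> UNIV" "y \<in> UNIV"
  have "dist (C * infdist x A) (C * infdist y A) = C * \<bar>infdist x A - infdist y A\<bar>"
    using C by (simp add: dist_real_def abs_mult right_diff_distrib[symmetric])
  also have "\<dots> \<le> C * dist x y" using C infdist_triangle_abs[of x A y] by (intro mult_left_mono) auto
  finally show "dist (C * infdist x A) (C * infdist y A) \<le> C * dist x y" .
qed (rule C)



definition rr :: "(nat \<Rightarrow> 'a::euclidean_space) \<Rightarrow> nat set \<Rightarrow> real \<Rightarrow> (nat \<Rightarrow> real) \<Rightarrow> nat \<Rightarrow> real" where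
  "rr X Sc C \<sigma> s = sqrt ((C * norm (X s - X (nn X Sc s)) / k0)\<^sup>2 - (\<sigma> (nn X Sc s))\<^sup>2)"

definition T0 :: "(nat \<Rightarrow> 'a::euclidean_space) \<Rightarrow> nat set \<Rightarrow> real \<Rightarrow> (nat \<Rightarrow> real) \<Rightarrow> nat \<Rightarrow> (nat \<Rightarrow> real) \<Rightarrow> real" where
  "T0 X Sc C \<sigma> = (\<lambda>s u. if s \<in> Sc then (if u s \<ge> 0 then 1 else 0) else Phi (u (nn X Sc s) / rr X Sc C \<sigma> s))"

lemma rr_props:
  fixes X :: "nat \<Rightarrow> 'a::euclidean_space"
  assumes fin: "finite Sc" and ne: "Sc \<noteq> {}" and sig: "\<forall>i\<in>Sc. \<sigma> i > 0"
    and dpos: "norm (X s - X (nn X Sc s)) > 0"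
    and Cb: "C > k0 * \<sigma> (nn X Sc s) / norm (X s - X (nn X Sc s))"
  shows "rr X Sc C \<sigma> s > 0" "sqrt ((\<sigma> (nn X Sc s))\<^sup>2 + (rr X Sc C \<sigma> s)\<^sup>2) = C * norm (X s - X (nn X Sc s)) / k0"
proof -
  let ?n = "nn X Sc s" let ?d = "norm (X s - X (nn X Sc s))"
  have sn: "\<sigma> ?n > 0" using sig nn_props(1)[OF fin ne, where X=X and s=s] by auto
  have "k0 * \<sigma> ?n < C * ?d" using Cb dpos by (simp add: divide_less_eq mult.commute)
  then have lt: "\<sigma> ?n < C * ?d / k0" using k0_pos by (simp add: less_divide_eq mult.commute)
  then have "(\<sigma> ?n)\<^sup>2 < (C * ?d / k0)\<^sup>2" using sn by (intro power_strict_mono) auto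
  then have pos: "(C * ?d / k0)\<^sup>2 - (\<sigma> ?n)\<^sup>2 > 0" by simp
  then show "rr X Sc C \<sigma> s > 0" unfolding rr_def by simp
  have "(rr X Sc C \<sigma> s)\<^sup>2 = (C * ?d / k0)\<^sup>2 - (\<sigma> ?n)\<^sup>2" unfolding rr_def using pos by simp
  then have e: "(\<sigma> ?n)\<^sup>2 + (rr X Sc C \<sigma> s)\<^sup>2 = (C * ?d / k0)\<^sup>2" by simp
  have p: "C * ?d / k0 > 0" using lt sn by linarith
  have "sqrt ((\<sigma> ?n)\<^sup>2 + (rr X Sc C \<sigma> s)\<^sup>2) = \<bar>C * ?d / k0\<bar>" unfolding e by (rule real_sqrt_abs)
  also have "\<dots> = C * ?d / k0" using p by (rule abs_of_pos)
  finally show "sqrt ((\<sigma> ?n)\<^sup>2 + (rr X Sc C \<sigma> s)\<^sup>2) = C * ?d / k0" .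
qed

lemma T0_E_in:
  fixes X :: "nat \<Rightarrow> 'a::euclidean_space"
  assumes s: "s \<in> Sc" and sd: "\<forall>i\<in>Sc. sd i > 0"
  shows "integral\<^sup>L (gauss_law Sc mu sd) (T0 X Sc C \<sigma> s) = Phi (mu s / sd s)"
proof -
  have "T0 X Sc C \<sigma> s = (\<lambda>u. if u s \<ge> 0 then 1 else 0)" using s unfolding T0_def by simp
  then show ?thesis using E_ind[OF s sd] by simp
qed

lemma T0_E_out:
  fixes X :: "nat \<Rightarrow> 'a::euclidean_space"
  assumes s: "s \<notin> Sc" and fin: "finite Sc" and ne: "Sc \<noteq> {}" and sd: "\<forall>i\<in>Sc. sd i > 0"
    and r: "rr X Sc C \<sigma> s > 0"
  shows "integral\<^sup>L (gauss_law Sc mu sd) (T0 X Sc C \<sigma> s)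
       = Phi (mu (nn X Sc s) / sqrt ((sd (nn X Sc s))\<^sup>2 + (rr X Sc C \<sigma> s)\<^sup>2))"
proof -
  have "T0 X Sc C \<sigma> s = (\<lambda>u. Phi (u (nn X Sc s) / rr X Sc C \<sigma> s))" using s unfolding T0_def by simp
  then show ?thesis using E_smooth[OF nn_props(1)[OF fin ne, where X=X and s=s] sd r] by simp
qed

lemma T0_half:
  fixes X :: "nat \<Rightarrow> 'a::euclidean_space"
  assumes fin: "finite Sc" and ne: "Sc \<noteq> {}"
    and r: "\<And>s. s \<in> SP \<Longrightarrow> s \<notin> Sc \<Longrightarrow> rr X Sc C \<sigma> s > 0"
  shows "T0 X Sc C \<sigma> \<in> half_rules SP Sc"
  unfolding half_rules_def treatment_rules_def
proof (intro CollectI conjI ballI allI impI)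
  fix s assume s: "s \<in> SP"
  show "T0 X Sc C \<sigma> s \<in> borel_measurable (obs_space Sc)"
  proof (cases "s \<in> Sc")
    case True
    then have "T0 X Sc C \<sigma> s = (\<lambda>u. if u s \<ge> 0 then 1 else 0)" unfolding T0_def by simp
    moreover have "(\<lambda>u. if u s \<ge> 0 then 1 else 0 :: real) \<in> borel_measurable (obs_space Sc)"
      unfolding obs_space_def using True by measurable
    ultimately show ?thesis by simp
  next
    case False
    have n: "nn X Sc s \<in> Sc" by (rule nn_props(1)[OF fin ne])
    have "T0 X Sc C \<sigma> s = (\<lambda>u. Phi (u (nn X Sc s) / rr X Sc C \<sigma> s))" using False unfolding T0_def by simp
    moreover have "(\<lambda>u. Phi (u (nn X Sc s) / rr X Sc C \<sigma> s)) \<in> borel_measurable (obs_space Sc)"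
      unfolding obs_space_def using n by measurable
    ultimately show ?thesis by simp
  qed
  fix u
  show "0 \<le> T0 X Sc C \<sigma> s u" "T0 X Sc C \<sigma> s u \<le> 1" unfolding T0_def by (auto simp: Phi_nonneg Phi_le1)
next
  fix sd :: "nat \<Rightarrow> real" and s assume sd: "\<forall>i\<in>Sc. sd i > 0" and s: "s \<in> SP"
  show "integral\<^sup>L (gauss_law Sc (\<lambda>_. 0) sd) (T0 X Sc C \<sigma> s) = 1/2"
  proof (cases "s \<in> Sc")
    case True
    then show ?thesis using T0_E_in[OF True sd, where mu="\<lambda>_. 0" and X=X and C=C and \<sigma>=\<sigma>] Phi_0 by simp
  next
    case False
    then show ?thesis using T0_E_out[OF False fin ne sd r[OF s False], where mu="\<lambda>_. 0"] Phi_0 by simp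
  qed
qed



lemma regret_upper:
  fixes X :: "nat \<Rightarrow> 'a::euclidean_space"
  assumes fin: "finite Sc" and ne: "Sc \<noteq> {}" and sig: "\<forall>i\<in>Sc. \<sigma> i > 0" and finSP: "finite SP"
    and dpos: "\<forall>s\<in>SP - Sc. norm (X s - X (nn X Sc s)) > 0"
    and Cb: "\<forall>s\<in>SP - Sc. C > k0 * \<sigma> (nn X Sc s) / norm (X s - X (nn X Sc s))"
    and sE: "\<forall>i\<in>Sc. \<sigma> i \<le> sE" and lip: "C-lipschitz_on UNIV \<tau>"
  shows "regret SP X \<sigma> (T0 X Sc C \<sigma>) Sc \<tau>
     \<le> (1 / real (card SP)) * (C / 2 * (\<Sum>s\<in>SP - Sc. norm (X s - X (nn X Sc s))) + real (card (SP \<inter> Sc)) * (sE * B_const))"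
proof -
  let ?d = "\<lambda>s. norm (X s - X (nn X Sc s))"
  let ?mu = "\<lambda>i. \<tau> (X i)"
  let ?term = "\<lambda>s. \<tau> (X s) * ((if \<tau> (X s) \<ge> 0 then 1 else 0) - integral\<^sup>L (gauss_law Sc ?mu \<sigma>) (T0 X Sc C \<sigma> s))"
  let ?b = "\<lambda>s. if s \<in> Sc then sE * B_const else C * ?d s / 2"
  have B0: "B_const \<ge> 0" by (rule B_props(1))
  have "?term s \<le> ?b s" if s: "s \<in> SP" for s
  proof (cases "s \<in> Sc")
    case True
    have "?term s = \<tau> (X s) * ((if \<tau> (X s) \<ge> 0 then 1 else 0) - Phi (\<tau> (X s) / \<sigma> s))"
      using T0_E_in[OF True sig, where mu="?mu" and X=X and C=C and \<sigma>=\<sigma>] by simp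
    also have "\<dots> \<le> \<sigma> s * B_const" using sig True by (intro site_in) auto
    also have "\<dots> \<le> sE * B_const" using sE True B0 by (intro mult_right_mono) auto
    finally show ?thesis using True by simp
  next
    case False
    let ?n = "nn X Sc s"
    have sd: "s \<in> SP - Sc" using s False by simp
    have dp: "?d s > 0" using dpos sd by auto
    have Cb': "C > k0 * \<sigma> ?n / ?d s" using Cb sd by auto
    have Cp: "C > 0"
    proof -
      have "\<sigma> ?n > 0" using sig nn_props(1)[OF fin ne, where X=X and s=s] by auto
      then have "k0 * \<sigma> ?n / ?d s > 0" using k0_pos dp by simp
      then show ?thesis using Cb' by linarith
    qed
    note R = rr_props[OF fin ne sig dp Cb']
    have "?term s = \<tau> (X s) * ((if \<tau> (X s) \<ge> 0 then 1 else 0) - Phi (\<tau> (X ?n) / (C * ?d s / k0)))"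
      using T0_E_out[OF False fin ne sig R(1), where mu="?mu"] R(2) by simp
    also have "\<dots> \<le> C * ?d s / 2"
    proof (rule site_out)
      show "C * ?d s > 0" using Cp dp by simp
      have "dist (\<tau> (X s)) (\<tau> (X ?n)) \<le> C * dist (X s) (X ?n)"
        using lip by (rule lipschitz_onD) auto
      then show "\<bar>\<tau> (X s) - \<tau> (X ?n)\<bar> \<le> C * ?d s" by (simp add: dist_real_def dist_norm)
    qed
    finally show ?thesis using False by simp
  qed
  then have "(\<Sum>s\<in>SP. ?term s) \<le> (\<Sum>s\<in>SP. ?b s)" by (intro sum_mono) auto
  also have "(\<Sum>s\<in>SP. ?b s) = (\<Sum>s\<in>SP \<inter> Sc. ?b s) + (\<Sum>s\<in>SP - Sc. ?b s)"
    by (rule sum.Int_Diff[OF finSP])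
  also have "(\<Sum>s\<in>SP \<inter> Sc. ?b s) = real (card (SP \<inter> Sc)) * (sE * B_const)" by simp
  also have "(\<Sum>s\<in>SP - Sc. ?b s) = (\<Sum>s\<in>SP - Sc. C / 2 * ?d s)" by (intro sum.cong) auto
  also have "\<dots> = C / 2 * (\<Sum>s\<in>SP - Sc. ?d s)" by (simp add: sum_distrib_left)
  finally have S: "(\<Sum>s\<in>SP. ?term s) \<le> C / 2 * (\<Sum>s\<in>SP - Sc. ?d s) + real (card (SP \<inter> Sc)) * (sE * B_const)"
    by simp
  show ?thesis unfolding regret_def
    by (rule mult_left_mono[OF S]) simp
qed

lemma regret_lower:
  fixes X :: "nat \<Rightarrow> 'a::euclidean_space"
  assumes fin: "finite Sc" and ne: "Sc \<noteq> {}" and sig: "\<forall>i\<in>Sc. \<sigma> i > 0" and finSP: "finite SP"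
    and T: "T \<in> half_rules SP Sc" and C: "C \<ge> 0"
  shows "regret SP X \<sigma> T Sc (\<lambda>x. C * infdist x (X ` Sc))
     = (1 / real (card SP)) * (C / 2 * (\<Sum>s\<in>SP - Sc. norm (X s - X (nn X Sc s))))"
proof -
  let ?t = "\<lambda>x. C * infdist x (X ` Sc)"
  have G: "gauss_law Sc (\<lambda>i. ?t (X i)) \<sigma> = gauss_law Sc (\<lambda>_. 0) \<sigma>"
    unfolding gauss_law_def by (intro PiM_cong) auto
  have E: "integral\<^sup>L (gauss_law Sc (\<lambda>i. ?t (X i)) \<sigma>) (T s) = 1/2" if "s \<in> SP" for s
    using T that sig unfolding G half_rules_def by auto
  have "(\<Sum>s\<in>SP. ?t (X s) * ((if ?t (X s) \<ge> 0 then 1 else 0) - integral\<^sup>L (gauss_law Sc (\<lambda>i. ?t (X i)) \<sigma>) (T s)))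
      = (\<Sum>s\<in>SP. (if s \<in> Sc then 0 else C / 2 * norm (X s - X (nn X Sc s))))"
  proof (intro sum.cong refl)
    fix s assume s: "s \<in> SP"
    have nn0: "?t (X s) \<ge> 0" using C infdist_nonneg[of "X s" "X ` Sc"] by (rule mult_nonneg_nonneg)
    show "?t (X s) * ((if ?t (X s) \<ge> 0 then 1 else 0) - integral\<^sup>L (gauss_law Sc (\<lambda>i. ?t (X i)) \<sigma>) (T s))
        = (if s \<in> Sc then 0 else C / 2 * norm (X s - X (nn X Sc s)))"
      using nn0 E[OF s] infdist_nn[OF fin ne, where X=X and s=s] by auto
  qed
  also have "\<dots> = (\<Sum>s\<in>SP \<inter> Sc. (if s \<in> Sc then 0 else C / 2 * norm (X s - X (nn X Sc s))))
      + (\<Sum>s\<in>SP - Sc. (if s \<in> Sc then 0 else C / 2 * norm (X s - X (nn X Sc s))))"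
    by (rule sum.Int_Diff[OF finSP])
  also have "\<dots> = C / 2 * (\<Sum>s\<in>SP - Sc. norm (X s - X (nn X Sc s)))"
    by (simp add: sum_distrib_left)
  finally have S: "(\<Sum>s\<in>SP. ?t (X s) * ((if ?t (X s) \<ge> 0 then 1 else 0) - integral\<^sup>L (gauss_law Sc (\<lambda>i. ?t (X i)) \<sigma>) (T s)))
      = C / 2 * (\<Sum>s\<in>SP - Sc. norm (X s - X (nn X Sc s)))" .
  show ?thesis unfolding regret_def S ..
qed

lemma MR_upper:
  fixes X :: "nat \<Rightarrow> 'a::euclidean_space"
  assumes fin: "finite Sc" and ne: "Sc \<noteq> {}" and sig: "\<forall>i\<in>Sc. \<sigma> i > 0" and finSP: "finite SP"
    and dpos: "\<forall>s\<in>SP - Sc. norm (X s - X (nn X Sc s)) > 0"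
    and Cb: "\<forall>s\<in>SP - Sc. C > k0 * \<sigma> (nn X Sc s) / norm (X s - X (nn X Sc s))"
    and sE: "\<forall>i\<in>Sc. \<sigma> i \<le> sE"
  shows "minimax_regret C SP X \<sigma> Sc
     \<le> ereal ((1 / real (card SP)) * (C / 2 * (\<Sum>s\<in>SP - Sc. norm (X s - X (nn X Sc s))) + real (card (SP \<inter> Sc)) * (sE * B_const)))"
  unfolding minimax_regret_def
proof (rule INF_lower2)
  show "T0 X Sc C \<sigma> \<in> half_rules SP Sc"
  proof (rule T0_half[OF fin ne])
    fix s assume "s \<in> SP" "s \<notin> Sc"
    then have sd: "s \<in> SP - Sc" by simp
    have dp: "norm (X s - X (nn X Sc s)) > 0" using dpos sd by auto
    show "rr X Sc C \<sigma> s > 0" using rr_props(1)[OF fin ne sig dp] Cb sd by auto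
  qed
  show "(SUP \<tau>\<in>{\<tau>. C-lipschitz_on UNIV \<tau>}. ereal (regret SP X \<sigma> (T0 X Sc C \<sigma>) Sc \<tau>))
      \<le> ereal ((1 / real (card SP)) * (C / 2 * (\<Sum>s\<in>SP - Sc. norm (X s - X (nn X Sc s))) + real (card (SP \<inter> Sc)) * (sE * B_const)))"
    using regret_upper[OF fin ne sig finSP dpos Cb sE] by (intro SUP_least) auto
qed

lemma MR_lower:
  fixes X :: "nat \<Rightarrow> 'a::euclidean_space"
  assumes fin: "finite Sc" and ne: "Sc \<noteq> {}" and sig: "\<forall>i\<in>Sc. \<sigma> i > 0" and finSP: "finite SP"
    and C: "C \<ge> 0"
  shows "ereal ((1 / real (card SP)) * (C / 2 * (\<Sum>s\<in>SP - Sc. norm (X s - X (nn X Sc s)))))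
     \<le> minimax_regret C SP X \<sigma> Sc"
  unfolding minimax_regret_def
proof (rule INF_greatest)
  fix T assume T: "T \<in> half_rules SP Sc"
  show "ereal ((1 / real (card SP)) * (C / 2 * (\<Sum>s\<in>SP - Sc. norm (X s - X (nn X Sc s)))))
      \<le> (SUP \<tau>\<in>{\<tau>. C-lipschitz_on UNIV \<tau>}. ereal (regret SP X \<sigma> T Sc \<tau>))"
  proof (rule SUP_upper2)
    show "(\<lambda>x. C * infdist x (X ` Sc)) \<in> {\<tau>. C-lipschitz_on UNIV \<tau>}" using lip_infdist[OF C] by simp
    show "ereal ((1 / real (card SP)) * (C / 2 * (\<Sum>s\<in>SP - Sc. norm (X s - X (nn X Sc s)))))
        \<le> ereal (regret SP X \<sigma> T Sc (\<lambda>x. C * infdist x (X ` Sc)))"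
      using regret_lower[OF fin ne sig finSP T C, where X=X] by simp
  qed
qed



theorem mainTheorem5:
  fixes S k :: nat and SE SP :: "nat set" and X :: "nat \<Rightarrow> 'a::euclidean_space"
    and \<sigma> :: "nat \<Rightarrow> real" and C :: real
  assumes SE_sub: "SE \<subseteq> {1..S}" and SE_card: "card SE \<ge> 2"
    and SP_sub: "SP \<subseteq> {1..S}" and SP_ne: "SP \<noteq> {}"
    and sigma_pos: "\<forall>s\<in>{1..S}. \<sigma> s > 0"
    and A2: "inj_on X {1..S}"
    and k_ge: "1 \<le> k" and k_lt: "k < card SE"
    and C_gt: "C > C_star SE SP k X \<sigma>"
  shows "\<bar>Min ((\<lambda>Sc. minimax_regret C SP X \<sigma> Sc) ` designs SE k)
           - ereal (C / 2 * (1 / real (card SP)) *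
               Min ((\<lambda>Sc. \<Sum>s\<in>SP - Sc. norm (X s - X (nn X Sc s))) ` designs SE k))\<bar>
         \<le> ereal (B_const * Max (\<sigma> ` SE) * real (min (card (SE \<inter> SP)) k) / real (card SP))"
proof -
  let ?D = "designs SE k"
  let ?f = "\<lambda>Sc. minimax_regret C SP X \<sigma> Sc"
  let ?g = "\<lambda>Sc. \<Sum>s\<in>SP - Sc. norm (X s - X (nn X Sc s))"
  let ?sE = "Max (\<sigma> ` SE)"
  let ?P = "real (card SP)"
  have finSE: "finite SE" using SE_sub finite_subset by blast
  have finSP: "finite SP" using SP_sub finite_subset by blast
  have SPpos: "?P > 0" using finSP SP_ne by (simp add: card_gt_0_iff)
  have finD: "finite ?D"
  proof (rule finite_subset)
    show "?D \<subseteq> Pow SE" unfolding designs_def by auto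
  qed (use finSE in simp)
  have SE_ne: "SE \<noteq> {}" using SE_card by auto
  then obtain e where e: "e \<in> SE" by auto
  have eD: "{e} \<in> ?D" using e k_ge unfolding designs_def by auto
  then have D_ne: "?D \<noteq> {}" by auto
  have Dprops: "finite Sc" "Sc \<noteq> {}" "Sc \<subseteq> {1..S}" "\<forall>i\<in>Sc. \<sigma> i > 0" "card Sc \<le> k" "Sc \<subseteq> SE"
    if "Sc \<in> ?D" for Sc
    using that SE_sub sigma_pos finSE unfolding designs_def by (auto intro: finite_subset)
  have dpos: "norm (X s - X (nn X Sc s)) > 0" if Sc: "Sc \<in> ?D" and s: "s \<in> SP - Sc" for Sc s
  proof -
    have n: "nn X Sc s \<in> Sc" using nn_props(1)[OF Dprops(1,2)[OF Sc], where X=X and s=s] .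
    have "X s \<noteq> X (nn X Sc s)"
    proof
      assume "X s = X (nn X Sc s)"
      then have "s = nn X Sc s" using A2 s SP_sub n Dprops(3)[OF Sc] by (auto dest: inj_onD)
      then show False using n s by simp
    qed
    then show ?thesis by simp
  qed
  let ?h = "\<lambda>Sc s. sqrt (pi/2) * \<sigma> (nn X Sc s) / norm (X s - X (nn X Sc s))"
  let ?Cset = "{?h Sc s | Sc s. Sc \<in> ?D \<and> s \<in> SP - Sc}"
  have finC: "finite ?Cset"
  proof (rule finite_subset)
    show "?Cset \<subseteq> (\<lambda>(Sc, s). ?h Sc s) ` (?D \<times> SP)" by auto
  qed (use finD finSP in simp)
  have Cb: "\<forall>s\<in>SP - Sc. C > k0 * \<sigma> (nn X Sc s) / norm (X s - X (nn X Sc s))" if Sc: "Sc \<in> ?D" for Sc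
  proof
    fix s assume s: "s \<in> SP - Sc"
    have "?h Sc s \<in> ?Cset" using Sc s by blast
    then have "?h Sc s \<le> C_star SE SP k X \<sigma>" unfolding C_star_def using finC by (intro Max_ge) auto
    then show "C > k0 * \<sigma> (nn X Sc s) / norm (X s - X (nn X Sc s))" using C_gt unfolding k0_def by simp
  qed
  have Cpos: "C > 0"
  proof -
    obtain p where p: "p \<in> SP" using SP_ne by auto
    obtain e' where e': "e' \<in> SE" "e' \<noteq> p"
    proof -
      have "card SE \<ge> 2" by (rule SE_card)
      then obtain a b where "a \<in> SE" "b \<in> SE" "a \<noteq> b"
        using finSE by (metis One_nat_def card_le_Suc0_iff_eq not_less_eq_eq numeral_2_eq_2)
      then show ?thesis using that by blast
    qed
    have D1: "{e'} \<in> ?D" using e' k_ge unfolding designs_def by auto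
    have sp: "p \<in> SP - {e'}" using p e' by auto
    have n: "nn X {e'} p \<in> {e'}" using nn_props(1)[OF Dprops(1,2)[OF D1], where X=X and s=p] .
    have "\<sigma> (nn X {e'} p) > 0" using n Dprops(4)[OF D1] by auto
    then have "k0 * \<sigma> (nn X {e'} p) / norm (X p - X (nn X {e'} p)) > 0"
      using k0_pos dpos[OF D1 sp] by simp
    moreover have "k0 * \<sigma> (nn X {e'} p) / norm (X p - X (nn X {e'} p)) < C" using Cb[OF D1] sp by blast
    ultimately show ?thesis by linarith
  qed
  have sE_ge: "\<forall>i\<in>Sc. \<sigma> i \<le> ?sE" if Sc: "Sc \<in> ?D" for Sc
    using Dprops(6)[OF Sc] finSE by (auto intro: Max_ge)
  have sE_pos: "?sE > 0"
  proof -
    have "\<sigma> e \<le> ?sE" using e finSE by (auto intro: Max_ge)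
    moreover have "\<sigma> e > 0" using e SE_sub sigma_pos by auto
    ultimately show ?thesis by simp
  qed
  have B0: "B_const \<ge> 0" by (rule B_props(1))
  define Mg where "Mg = Min (?g ` ?D)"
  have "Mg \<in> ?g ` ?D" unfolding Mg_def using finD D_ne by (intro Min_in) auto
  then obtain Sc0 where Sc0: "Sc0 \<in> ?D" "?g Sc0 = Mg" by auto
  have Mg_le: "Mg \<le> ?g Sc" if "Sc \<in> ?D" for Sc
    unfolding Mg_def using finD that by (intro Min_le) auto
  define lo where "lo = C / 2 * (1 / ?P) * Mg"
  define bnd where "bnd = B_const * ?sE * real (min (card (SE \<inter> SP)) k) / ?P"
  define m where "m = Min (?f ` ?D)"
  have low: "ereal lo \<le> m"
    unfolding m_def
  proof (rule Min.boundedI)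
    show "finite (?f ` ?D)" using finD by simp
    show "?f ` ?D \<noteq> {}" using D_ne by simp
    fix y assume "y \<in> ?f ` ?D"
    then obtain Sc where Sc: "Sc \<in> ?D" and y: "y = ?f Sc" by auto
    have kk: "C / 2 * (1 / ?P) \<ge> 0" using Cpos SPpos by simp
    have "lo \<le> C / 2 * (1 / ?P) * ?g Sc" unfolding lo_def by (rule mult_left_mono[OF Mg_le[OF Sc] kk])
    also have "\<dots> = (1 / ?P) * (C / 2 * ?g Sc)" by (simp add: mult_ac)
    finally have "lo \<le> (1 / ?P) * (C / 2 * ?g Sc)" .
    then have "ereal lo \<le> ereal ((1 / ?P) * (C / 2 * ?g Sc))" by simp
    also have "\<dots> \<le> ?f Sc"
      using MR_lower[OF Dprops(1,2,4)[OF Sc] finSP, where C=C and X=X] Cpos by simp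
    finally show "ereal lo \<le> y" using y by simp
  qed
  have up: "m \<le> ereal (lo + bnd)"
  proof -
    have dA: "\<forall>s\<in>SP - Sc0. norm (X s - X (nn X Sc0 s)) > 0" using dpos[OF Sc0(1)] by blast
    have "m \<le> ?f Sc0" unfolding m_def using finD Sc0 by (intro Min_le) auto
    also have "\<dots> \<le> ereal ((1 / ?P) * (C / 2 * ?g Sc0 + real (card (SP \<inter> Sc0)) * (?sE * B_const)))"
      by (rule MR_upper[OF Dprops(1,2,4)[OF Sc0(1)] finSP dA Cb[OF Sc0(1)] sE_ge[OF Sc0(1)]])
    also have "\<dots> \<le> ereal (lo + bnd)"
    proof -
      have c1: "card (SP \<inter> Sc0) \<le> card (SE \<inter> SP)"
        using Dprops(6)[OF Sc0(1)] finSE by (intro card_mono) auto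
      have c2: "card (SP \<inter> Sc0) \<le> k"
        using Dprops(1,5)[OF Sc0(1)] card_mono[of Sc0 "SP \<inter> Sc0"] by auto
      have c: "real (card (SP \<inter> Sc0)) \<le> real (min (card (SE \<inter> SP)) k)" using c1 c2 by simp
      have "(1 / ?P) * (real (card (SP \<inter> Sc0)) * (?sE * B_const))
          \<le> (1 / ?P) * (real (min (card (SE \<inter> SP)) k) * (?sE * B_const))"
        using c sE_pos B0 SPpos by (intro mult_left_mono mult_right_mono) auto
      also have "\<dots> = bnd" unfolding bnd_def by simp
      finally have "(1 / ?P) * (real (card (SP \<inter> Sc0)) * (?sE * B_const)) \<le> bnd" .
      moreover have "(1 / ?P) * (C / 2 * ?g Sc0) = lo" unfolding lo_def using Sc0 by simp
      ultimately show ?thesis by (simp add: distrib_left)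
    qed
    finally show ?thesis .
  qed
  have "\<bar>m - ereal lo\<bar> \<le> ereal bnd"
  proof (cases m)
    case (real r)
    then show ?thesis using low up by simp
  next
    case PInf then show ?thesis using up by simp
  next
    case MInf then show ?thesis using low by simp
  qed
  then show ?thesis unfolding m_def lo_def bnd_def Mg_def .
qed

end
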